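(* Let $p>3$ be a prime and let $d\in\mathbb{Z}$. Write $n=(p-1)/2$ and define $$S(d,p)=\det\left[\left(\frac{j^2+dk^2}{p}\right)\right]_{1\le j,k\le n},\qquad T(d,p)=\det\left[\left(\frac{j^2+dk^2}{p}\right)\right]_{0\le j,k\le n}.$$ (i) Let $\bar S(d,p)$ be the determinant obtained from $\det\left[\left(\frac{j^2+dk^2}{p}\right)\right]_{1\le j,k\le n}$ by replacing all the entries in the first row (the row $j=1$) by $1$. If $\left(\frac dp\right)=1$, then $\bar S(d,p)=-S(d,p)$. If $\left(\frac dp\right)=-1$, then $$\bar S(d,p)=\frac{2}{p-1}T(d,p)=\frac{p-1}{2}\det\left[\left(\frac{j^2+dk^2}{p}\right)\right]_{2\le j,k\le n}.$$ (ii) For any integer $m$ with $(p-1)/2<m<p-1$, the determinant $T_m(d,p)=\det\left[(j^2+dk^2)^m\right]_{0\le j,k\le (p-1)/2}$ satisfies $T_m(d,p)\equiv 0\pmod p$.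
   Context: $\left(\frac{\cdot}{p}\right)$ denotes the Legendre symbol modulo $p$ (with $\left(\frac{0}{p}\right)=0$). *)

theory Defs
  imports "HOL-Number_Theory.Number_Theory" "Jordan_Normal_Form.Determinant"
begin

(* Matrix [ (j^2 + d k^2 / p) ]_{a <= j,k <= b}, realised as a (b-a+1)x(b-a+1) matrix
   whose (i,l) entry corresponds to j = a+i, k = a+l. *)
definition legmat :: "int \<Rightarrow> int \<Rightarrow> nat \<Rightarrow> nat \<Rightarrow> int mat" where
  "legmat d p a b = mat (b + 1 - a) (b + 1 - a)
     (\<lambda>(i, l). Legendre ((int (a + i))^2 + d * (int (a + l))^2) p)"

definition S :: "int \<Rightarrow> int \<Rightarrow> int" where
  "S d p = det (legmat d p 1 (nat ((p - 1) div 2)))"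

definition T :: "int \<Rightarrow> int \<Rightarrow> int" where
  "T d p = det (legmat d p 0 (nat ((p - 1) div 2)))"

definition Sbar :: "int \<Rightarrow> int \<Rightarrow> int" where
  "Sbar d p = (let n = nat ((p - 1) div 2) in
     det (mat n n (\<lambda>(i, l). if i = 0 then 1
                              else Legendre ((int (1 + i))^2 + d * (int (1 + l))^2) p)))"

definition Tm :: "nat \<Rightarrow> int \<Rightarrow> int \<Rightarrow> int" where
  "Tm m d p = (let n = nat ((p - 1) div 2) in
     det (mat (n + 1) (n + 1) (\<lambda>(i, l). ((int i)^2 + d * (int l)^2) ^ m)))"

end

theory Submission
  imports Defs
begin


lemma mat_delete_col_indep:
  assumes A: "A \<in> carrier_mat n n" and B: "B \<in> carrier_mat n n"
    and eq: "\<forall>i<n. \<forall>j<n. j \<noteq> k \<longrightarrow> B $$ (i,j) = A $$ (i,j)"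
  shows "mat_delete B i k = mat_delete A i k"
proof (rule eq_matI)
  fix a b assume "a < dim_row (mat_delete A i k)" "b < dim_col (mat_delete A i k)"
  then have ab: "a < n - 1" "b < n - 1" using A by auto
  have r: "(if a < i then a else Suc a) < n" using ab by auto
  have c: "(if b < k then b else Suc b) < n" "(if b < k then b else Suc b) \<noteq> k" using ab by auto
  show "mat_delete B i k $$ (a, b) = mat_delete A i k $$ (a, b)"
    unfolding mat_delete_def using A B ab eq r c by auto
qed (use A B in auto)

lemma det_col_linear:
  assumes A: "A \<in> carrier_mat n n" and B: "B \<in> carrier_mat n n" and k: "k < n"
    and eq: "\<forall>i<n. \<forall>j<n. j \<noteq> k \<longrightarrow> B $$ (i,j) = A $$ (i,j)"
  shows "det B = (\<Sum>i<n. B $$ (i,k) * cofactor A i k)"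
  using laplace_expansion_column[OF B k] mat_delete_col_indep[OF A B eq]
  unfolding cofactor_def by simp

lemma alien_col:
  assumes A: "A \<in> carrier_mat n n" and k: "k < n" and l: "l < n" and lk: "l \<noteq> k"
  shows "(\<Sum>i<n. A $$ (i,l) * cofactor A i k) = 0"
proof -
  define B where "B = mat n n (\<lambda>(i,j). if j = k then A $$ (i,l) else A $$ (i,j))"
  have B: "B \<in> carrier_mat n n" unfolding B_def by simp
  have "col B k = col B l" unfolding B_def using k l lk by (auto intro!: eq_vecI)
  then have "det B = 0" using det_identical_columns[OF B _ k l] lk by auto
  moreover have "det B = (\<Sum>i<n. B $$ (i,k) * cofactor A i k)"
    by (rule det_col_linear[OF A B k]) (auto simp: B_def)
  moreover have "(\<Sum>i<n. B $$ (i,k) * cofactor A i k) = (\<Sum>i<n. A $$ (i,l) * cofactor A i k)"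
    using k by (intro sum.cong) (auto simp: B_def)
  ultimately show ?thesis by simp
qed

lemma det_col_add:
  assumes A: "A \<in> carrier_mat n n" and B: "B \<in> carrier_mat n n" and k: "k < n"
    and L: "L \<subseteq> {..<n}" "k \<notin> L"
    and eq: "\<forall>i<n. \<forall>j<n. j \<noteq> k \<longrightarrow> B $$ (i,j) = A $$ (i,j)"
    and eqk: "\<forall>i<n. B $$ (i,k) = A $$ (i,k) + (\<Sum>l\<in>L. A $$ (i,l))"
  shows "det B = det A"
proof -
  have fin: "finite L" using L finite_subset by blast
  have "det B = (\<Sum>i<n. (A $$ (i,k) + (\<Sum>l\<in>L. A $$ (i,l))) * cofactor A i k)"
    using det_col_linear[OF A B k eq] eqk by simp
  also have "\<dots> = (\<Sum>i<n. A $$ (i,k) * cofactor A i k) + (\<Sum>l\<in>L. \<Sum>i<n. A $$ (i,l) * cofactor A i k)"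
    by (simp add: distrib_right sum.distrib sum_distrib_right sum.swap[of _ L])
  also have "(\<Sum>l\<in>L. \<Sum>i<n. A $$ (i,l) * cofactor A i k) = 0"
    using L by (intro sum.neutral) (auto intro: alien_col[OF A k])
  finally show ?thesis using laplace_expansion_column[OF A k] by simp
qed

lemma det_row_add':
  assumes A: "A \<in> carrier_mat n n" and B: "B \<in> carrier_mat n n" and k: "k < n"
    and L: "L \<subseteq> {..<n}" "k \<notin> L"
    and eq: "\<forall>i<n. \<forall>j<n. i \<noteq> k \<longrightarrow> B $$ (i,j) = A $$ (i,j)"
    and eqk: "\<forall>j<n. B $$ (k,j) = A $$ (k,j) + (\<Sum>l\<in>L. A $$ (l,j))"
  shows "det B = det A"
proof -
  have "det (transpose_mat B) = det (transpose_mat A)"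
    by (rule det_col_add[of _ n _ k L]) (use A B k L eq eqk in \<open>auto intro!: sum.cong\<close>)
  then show ?thesis using det_transpose A B by metis
qed

lemma det_col_single:
  assumes A: "A \<in> carrier_mat n n" and k: "k < n" and i0: "i0 < n"
    and z: "\<forall>i<n. i \<noteq> i0 \<longrightarrow> A $$ (i,k) = 0"
  shows "det A = A $$ (i0,k) * cofactor A i0 k"
proof -
  have "det A = (\<Sum>i<n. if i = i0 then A $$ (i0,k) * cofactor A i0 k else 0)"
    unfolding laplace_expansion_column[OF A k] using z by (intro sum.cong) auto
  then show ?thesis using i0 by simp
qed

lemma det_row_single:
  assumes A: "A \<in> carrier_mat n n" and k: "k < n" and j0: "j0 < n"
    and z: "\<forall>j<n. j \<noteq> j0 \<longrightarrow> A $$ (k,j) = 0"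
  shows "det A = A $$ (k,j0) * cofactor A k j0"
proof -
  have "det A = (\<Sum>j<n. if j = j0 then A $$ (k,j0) * cofactor A k j0 else 0)"
    unfolding laplace_expansion_row[OF A k] using z by (intro sum.cong) auto
  then show ?thesis using j0 by simp
qed

lemma det_cong_mod:
  fixes A B :: "int mat"
  assumes A: "A \<in> carrier_mat n n" and B: "B \<in> carrier_mat n n"
    and c: "\<forall>i<n. \<forall>j<n. [A $$ (i,j) = B $$ (i,j)] (mod p)"
  shows "[det A = det B] (mod p)"
  unfolding det_def'[OF A] det_def'[OF B]
proof (intro cong_sum cong_mult cong_refl cong_prod)
  fix q i assume q: "q \<in> {q. q permutes {0..<n}}" and i: "i \<in> {0..<n}"
  then have "q i < n" using permutes_in_image by fastforce
  then show "[A $$ (i, q i) = B $$ (i, q i)] (mod p)" using c i by auto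
qed



lemma leg_cong:
  assumes "[a = b] (mod p)"
  shows "Legendre a p = Legendre b p"
proof -
  have "[a = 0] (mod p) \<longleftrightarrow> [b = 0] (mod p)" using assms cong_sym cong_trans by blast
  moreover have "QuadRes p a \<longleftrightarrow> QuadRes p b"
    unfolding QuadRes_def using assms cong_sym cong_trans by blast
  ultimately show ?thesis unfolding Legendre_def by simp
qed

lemma euler_int:
  fixes p a :: int
  assumes "prime p" "p > 2"
  shows "[Legendre a p = a ^ nat ((p - 1) div 2)] (mod p)"
proof -
  have P: "prime (nat p)" "2 < nat p" using assms by auto
  have e: "int (nat p) = p" using assms by auto
  have "(nat p - 1) div 2 = nat ((p - 1) div 2)" using assms by (simp add: nat_div_distrib nat_diff_distrib)
  then show ?thesis using euler_criterion[OF P, of a] e by simp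
qed

lemma leg_zero_iff:
  "Legendre a p = 0 \<longleftrightarrow> p dvd a"
  unfolding Legendre_def by (auto simp: cong_0_iff)

lemma leg_vals: "Legendre a p \<in> {-1, 0, 1}"
  unfolding Legendre_def by auto

lemma small_cong:
  fixes x y p :: int
  assumes "x \<in> {-1,0,1}" "y \<in> {-1,0,1}" "p > 2" "[x = y] (mod p)"
  shows "x = y"
proof -
  have "p dvd (x - y)" using assms(4) by (simp add: cong_iff_dvd_diff)
  moreover have "\<bar>x - y\<bar> < p" using assms by auto
  ultimately show ?thesis
    using dvd_imp_le_int[of "x - y" p] assms(3) by (cases "x - y = 0") auto
qed

lemma leg_sq_one:
  fixes p k :: int
  assumes "prime p" "p > 2" "\<not> p dvd k"
  shows "(Legendre k p)^2 = 1"
proof -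
  have "Legendre k p \<noteq> 0" using assms leg_zero_iff by auto
  then show ?thesis using leg_vals[of k p] by auto
qed

lemma fermat_int:
  fixes p x :: int
  assumes "prime p" "p > 2" "\<not> p dvd x"
  shows "[x ^ nat (p - 1) = 1] (mod p)"
proof -
  have "odd p" using assms prime_odd_int by auto
  then have e: "nat (p - 1) = 2 * nat ((p - 1) div 2)" by (auto elim!: oddE simp: nat_mult_distrib)
  have "x ^ nat (p - 1) = (x ^ nat ((p - 1) div 2))^2" unfolding e by (metis power_mult mult.commute)
  moreover have "[(x ^ nat ((p - 1) div 2))^2 = (Legendre x p)^2] (mod p)"
    using euler_int[OF assms(1,2), of x] by (intro cong_pow) (simp add: cong_sym)
  ultimately show ?thesis using leg_sq_one[OF assms] by simp
qed

lemma leg_mult_sq: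
  fixes p d k :: int
  assumes "prime p" "p > 2" "\<not> p dvd k"
  shows "Legendre (d * k^2) p = Legendre d p"
proof -
  let ?n = "nat ((p - 1) div 2)"
  have "[Legendre (d * k^2) p = (d * k^2) ^ ?n] (mod p)" using euler_int[OF assms(1,2)] .
  moreover have "(d * k^2) ^ ?n = d ^ ?n * (k ^ ?n)^2"
    by (simp add: power_mult_distrib power_mult[symmetric] mult.commute)
  moreover have "[d ^ ?n * (k ^ ?n)^2 = Legendre d p * (Legendre k p)^2] (mod p)"
    using euler_int[OF assms(1,2)] by (intro cong_mult cong_pow) (simp_all add: cong_sym)
  ultimately have "[Legendre (d * k^2) p = Legendre d p] (mod p)"
    using leg_sq_one[OF assms] by (metis cong_trans mult.right_neutral)
  then show ?thesis using small_cong leg_vals assms(2) by blast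
qed

lemma leg_one: "p > 1 \<Longrightarrow> Legendre 1 p = 1"
  unfolding Legendre_def QuadRes_def
  by (auto simp: cong_def intro: exI[of _ 1])

lemma power_sum_mod:
  fixes p :: int and k :: nat
  assumes "prime p" "p > 2" "0 < k" "k < nat (p - 1)"
  shows "[(\<Sum>x\<in>{0..<p}. x ^ k) = 0] (mod p)"
proof -
  define P where "P = nat p"
  have P: "prime P" and pP: "p = int P" using assms P_def by auto
  have P1: "1 < P" using assms P_def by auto
  obtain g where g: "residue_primroot P g" using prime_primitive_root_exists[OF P1 P] by blast
  have cop: "coprime P g" and ordg: "ord P g = P - 1"
    using g P by (auto simp: residue_primroot_def totient_prime)
  have "\<not> [g ^ k = 1] (mod P)"
  proof
    assume "[g ^ k = 1] (mod P)"
    then have "ord P g dvd k" using ord_divides by blast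
    then show False using assms ordg P_def by (auto dest: dvd_imp_le)
  qed
  then have nc: "\<not> [int g ^ k = 1] (mod p)" unfolding pP
    by (metis cong_int_iff of_nat_1 of_nat_power)
  define G where "G = int g"
  have copG: "coprime G p" unfolding G_def pP using cop by (simp add: coprime_commute)
  define A where "A = {0..<p}"
  define f where "f x = (G * x) mod p" for x
  have inj: "inj_on f A"
  proof
    fix x y assume xy: "x \<in> A" "y \<in> A" "f x = f y"
    then have "[G * x = G * y] (mod p)" unfolding f_def cong_def by simp
    then have "[x = y] (mod p)" using copG cong_mult_lcancel by blast
    then show "x = y" using xy unfolding A_def cong_def by auto
  qed
  have sub: "f ` A \<subseteq> A" unfolding f_def A_def using assms by auto
  have img: "f ` A = A" using endo_inj_surj[of A f] inj sub unfolding A_def by auto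
  let ?S = "\<Sum>x\<in>A. x ^ k"
  have "?S = (\<Sum>x\<in>f ` A. x ^ k)" using img by simp
  also have "\<dots> = (\<Sum>x\<in>A. (f x) ^ k)" using sum.reindex[OF inj] by simp
  finally have "[?S = (\<Sum>x\<in>A. (G * x) ^ k)] (mod p)"
    by (simp add: f_def cong_sum cong_pow cong_mod_left)
  then have "[?S = G ^ k * ?S] (mod p)" by (simp add: power_mult_distrib sum_distrib_left)
  then have "p dvd (G ^ k - 1) * ?S" by (simp add: cong_iff_dvd_diff algebra_simps dvd_diff_commute)
  moreover have "\<not> p dvd (G ^ k - 1)" using nc unfolding G_def by (simp add: cong_iff_dvd_diff)
  ultimately have "p dvd ?S" using assms(1) prime_dvd_mult_iff by blast
  then show ?thesis unfolding A_def by (simp add: cong_0_iff)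
qed



lemma leg_abs: "\<bar>Legendre a p\<bar> \<le> 1"
  unfolding Legendre_def by auto

lemma sum_half_sym:
  fixes p :: int and F :: "int \<Rightarrow> int"
  assumes "odd p" "p > 2" and sym: "\<And>y. F (p - y) = F y"
  shows "(\<Sum>x\<in>{0..<p}. F x) = F 0 + 2 * (\<Sum>x\<in>{1..(p-1) div 2}. F x)"
proof -
  define n where "n = (p - 1) div 2"
  have pn: "p = 2 * n + 1" using assms n_def by (auto elim!: oddE)
  have split: "{0..<p} = insert 0 ({1..n} \<union> {n+1..<p})" using pn assms by auto
  have "(\<Sum>x\<in>{0..<p}. F x) = F 0 + ((\<Sum>x\<in>{1..n}. F x) + (\<Sum>x\<in>{n+1..<p}. F x))"
  proof -
    have d: "{1..n} \<inter> {n+1..<p} = {}" by auto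
    have "(\<Sum>x\<in>{1..n} \<union> {n+1..<p}. F x) = (\<Sum>x\<in>{1..n}. F x) + (\<Sum>x\<in>{n+1..<p}. F x)"
      by (rule sum.union_disjoint) (use d in auto)
    then show ?thesis unfolding split by (subst sum.insert) (use pn assms in auto)
  qed
  also have "(\<Sum>x\<in>{n+1..<p}. F x) = (\<Sum>x\<in>{1..n}. F x)"
    by (rule sum.reindex_bij_witness[of _ "\<lambda>x. p - x" "\<lambda>x. p - x"]) (use pn sym in auto)
  finally show ?thesis unfolding n_def by simp
qed

lemma sum_pow_cases:
  fixes p :: int and r :: nat
  assumes "prime p" "p > 2" "r \<le> nat ((p - 1) div 2)"
  shows "[(\<Sum>x\<in>{0..<p}. x ^ (2 * r)) = (if r = nat ((p - 1) div 2) then -1 else 0)] (mod p)"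
proof -
  have "odd p" using assms prime_odd_int by auto
  then have e: "nat (p - 1) = 2 * nat ((p - 1) div 2)" by (auto elim!: oddE simp: nat_mult_distrib)
  consider "r = 0" | "0 < r" "r < nat ((p - 1) div 2)" | "r = nat ((p - 1) div 2)"
    using assms(3) by linarith
  then show ?thesis
  proof cases
    case 1
    have "r \<noteq> nat ((p - 1) div 2)" using 1 assms by auto
    moreover have "(\<Sum>x\<in>{0..<p}. x ^ (2 * r)) = p" using 1 assms by simp
    ultimately show ?thesis by (simp add: cong_0_iff)
  next
    case 2
    then show ?thesis using power_sum_mod[OF assms(1,2), of "2*r"] e by auto
  next
    case 3
    have split: "{0..<p} = insert 0 {1..<p}" using assms by auto
    have pos: "0 < r" using 3 assms by auto
    have "(\<Sum>x\<in>{0..<p}. x ^ (2 * r)) = (\<Sum>x\<in>{1..<p}. x ^ nat (p - 1))"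
      unfolding split using pos 3 e by (subst sum.insert) auto
    also have "[\<dots> = (\<Sum>x\<in>{1..<p}. 1)] (mod p)"
    proof (rule cong_sum)
      fix x assume "x \<in> {1..<p}"
      then have "\<not> p dvd x" using zdvd_not_zless by auto
      then show "[x ^ nat (p - 1) = 1] (mod p)" using fermat_int assms by blast
    qed
    also have "(\<Sum>x\<in>{1..<p}. (1::int)) = p - 1" using assms by simp
    also have "[p - 1 = -1] (mod p)" by (simp add: cong_iff_dvd_diff)
    finally show ?thesis using 3 by simp
  qed
qed

lemma full_char_sum_mod:
  fixes p a b :: int
  assumes "prime p" "p > 2" "\<not> p dvd a"
  shows "[(\<Sum>x\<in>{0..<p}. Legendre (a * x^2 + b) p) = - Legendre a p] (mod p)"
proof -
  define N where "N = nat ((p - 1) div 2)"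
  have "[(\<Sum>x\<in>{0..<p}. Legendre (a * x^2 + b) p) = (\<Sum>x\<in>{0..<p}. (a * x^2 + b) ^ N)] (mod p)"
    unfolding N_def by (intro cong_sum euler_int assms)
  also have "(\<Sum>x\<in>{0..<p}. (a * x^2 + b) ^ N)
     = (\<Sum>x\<in>{0..<p}. \<Sum>r\<le>N. of_nat (N choose r) * (a * x^2) ^ r * b ^ (N - r))"
    by (simp add: binomial_ring)
  also have "\<dots> = (\<Sum>r\<le>N. (of_nat (N choose r) * a ^ r * b ^ (N - r)) * (\<Sum>x\<in>{0..<p}. x ^ (2 * r)))"
  proof -
    have pw: "(a * x^2) ^ r = a ^ r * x ^ (2 * r)" for x :: int and r
      by (simp add: power_mult_distrib power_mult)
    have "(\<Sum>x\<in>{0..<p}. \<Sum>r\<le>N. of_nat (N choose r) * (a * x^2) ^ r * b ^ (N - r))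
       = (\<Sum>x\<in>{0..<p}. \<Sum>r\<le>N. (of_nat (N choose r) * a ^ r * b ^ (N - r)) * x ^ (2 * r))"
      by (intro sum.cong refl) (simp add: pw mult_ac)
    also have "\<dots> = (\<Sum>r\<le>N. \<Sum>x\<in>{0..<p}. (of_nat (N choose r) * a ^ r * b ^ (N - r)) * x ^ (2 * r))"
      by (rule sum.swap)
    finally show ?thesis by (simp add: sum_distrib_left)
  qed
  also have "[\<dots> = (\<Sum>r\<le>N. (of_nat (N choose r) * a ^ r * b ^ (N - r)) * (if r = N then -1 else 0))] (mod p)"
    by (intro cong_sum cong_mult cong_refl) (use sum_pow_cases[OF assms(1,2)] N_def in auto)
  also have "(\<Sum>r\<le>N. (of_nat (N choose r) * a ^ r * b ^ (N - r)) * (if r = N then -1 else 0)) = - (a ^ N)"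
    by (simp add: if_distrib cong: if_cong) 
  also have "[- (a ^ N) = - Legendre a p] (mod p)"
    unfolding N_def using euler_int[OF assms(1,2), of a] by (simp add: cong_minus_minus_iff cong_sym)
  finally show ?thesis .
qed

lemma half_char_sum:
  fixes p a b :: int
  assumes "prime p" "p > 2" "\<not> p dvd a" "\<not> p dvd b"
  shows "2 * (\<Sum>k\<in>{1..(p-1) div 2}. Legendre (a * k^2 + b) p) = - (Legendre a p + Legendre b p)"
proof -
  define n where "n = (p - 1) div 2"
  define H where "H = (\<Sum>k\<in>{1..n}. Legendre (a * k^2 + b) p)"
  have odd: "odd p" using assms prime_odd_int by auto
  then have pn: "p = 2 * n + 1" using n_def by (auto elim!: oddE)
  have sym: "Legendre (a * (p - y)^2 + b) p = Legendre (a * y^2 + b) p" for y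
  proof (rule leg_cong)
    have "[(p - y)^2 = y^2] (mod p)"
      by (simp add: cong_iff_dvd_diff power2_eq_square algebra_simps)
    then show "[a * (p - y)^2 + b = a * y^2 + b] (mod p)" by (intro cong_add cong_mult cong_refl)
  qed
  have full: "(\<Sum>x\<in>{0..<p}. Legendre (a * x^2 + b) p) = Legendre b p + 2 * H"
    using sum_half_sym[OF odd assms(2), of "\<lambda>x. Legendre (a * x^2 + b) p", OF sym]
    unfolding H_def n_def by simp
  have "[Legendre b p + 2 * H = - Legendre a p] (mod p)"
    using full_char_sum_mod[OF assms(1,2,3), of b] full by simp
  then have "p dvd (Legendre a p + Legendre b p + 2 * H)"
    by (simp add: cong_iff_dvd_diff algebra_simps)
  then obtain t where t: "Legendre a p + Legendre b p + 2 * H = p * t" by blast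
  have la: "Legendre a p \<in> {-1, 1}" using leg_vals[of a p] leg_zero_iff[of a p] assms by auto
  have lb: "Legendre b p \<in> {-1, 1}" using leg_vals[of b p] leg_zero_iff[of b p] assms by auto
  have "\<bar>H\<bar> \<le> (\<Sum>k\<in>{1..n}. \<bar>Legendre (a * k^2 + b) p\<bar>)" unfolding H_def by (rule sum_abs)
  also have "\<dots> \<le> (\<Sum>k\<in>{1..n}. 1)"
    by (intro sum_mono) (simp add: leg_abs)
  also have "\<dots> = n" using pn assms by simp
  finally have Hb: "\<bar>H\<bar> \<le> n" .
  have "even (p * t)" using la lb t[symmetric] by auto
  then have "even t" using odd by simp
  have "t = 0"
  proof (rule ccontr)
    assume "t \<noteq> 0"
    with \<open>even t\<close> have "\<bar>t\<bar> \<ge> 2" by (auto elim!: evenE)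
    then have "\<bar>p * t\<bar> \<ge> 2 * p" using assms by (simp add: abs_mult)
    moreover have "\<bar>p * t\<bar> \<le> 2 + 2 * n" using t la lb Hb by auto
    ultimately show False using pn assms(2) by linarith
  qed
  then show ?thesis using t unfolding H_def n_def by simp
qed



lemma sum_shift1: "(\<Sum>i<N. g (1 + int i)) = (\<Sum>k\<in>{1..int N}. g k)"
  by (rule sum.reindex_bij_witness[of _ "\<lambda>k. nat k - 1" "\<lambda>i. 1 + int i"]) auto

lemma sum_shift2: "(\<Sum>i\<in>{1..<N+1}. g (int i)) = (\<Sum>k\<in>{1..int N}. g k)"
  by (rule sum.reindex_bij_witness[of _ "\<lambda>k. nat k" "\<lambda>i. int i"]) auto

context
  fixes p d :: int
  assumes pr: "prime p" and p3: "p > 3" and dn: "\<not> p dvd d"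
begin

lemma p2: "p > 2" using p3 by simp

lemma ndvd_small: "1 \<le> j \<Longrightarrow> j \<le> (p - 1) div 2 \<Longrightarrow> \<not> p dvd j"
  using zdvd_not_zless[of j p] by auto

lemma ndvd_sq: "\<not> p dvd j \<Longrightarrow> \<not> p dvd j^2"
  using pr by (simp add: prime_dvd_power_iff)

lemma rowsum:
  assumes "1 \<le> j" "j \<le> (p - 1) div 2"
  shows "2 * (\<Sum>k\<in>{1..(p - 1) div 2}. Legendre (j^2 + d * k^2) p) = - (Legendre d p + 1)"
proof -
  have nj: "\<not> p dvd j^2" using ndvd_sq ndvd_small assms by blast
  have "Legendre (j^2) p = 1" using leg_mult_sq[OF pr p2 ndvd_small[OF assms], of 1] leg_one p2 by simp
  moreover have "2 * (\<Sum>k\<in>{1..(p - 1) div 2}. Legendre (d * k^2 + j^2) p) = - (Legendre d p + Legendre (j^2) p)"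
    using half_char_sum[OF pr p2 dn nj] .
  ultimately show ?thesis by (simp add: add.commute)
qed

lemma colsum:
  assumes "1 \<le> k" "k \<le> (p - 1) div 2"
  shows "2 * (\<Sum>j\<in>{1..(p - 1) div 2}. Legendre (j^2 + d * k^2) p) = - (1 + Legendre d p)"
proof -
  have nk: "\<not> p dvd d * k^2" using ndvd_sq ndvd_small assms dn pr by (simp add: prime_dvd_mult_iff)
  have "Legendre (d * k^2) p = Legendre d p" using leg_mult_sq[OF pr p2 ndvd_small[OF assms]] .
  moreover have "2 * (\<Sum>j\<in>{1..(p - 1) div 2}. Legendre (1 * j^2 + d * k^2) p) = - (Legendre 1 p + Legendre (d * k^2) p)"
    using half_char_sum[OF pr p2 _ nk, of 1] p3 by simp
  ultimately show ?thesis using leg_one p2 by simp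
qed

lemma sqsum: "(\<Sum>j\<in>{1..(p - 1) div 2}. Legendre (j^2) p) = (p - 1) div 2"
proof -
  have "(\<Sum>j\<in>{1..(p - 1) div 2}. Legendre (j^2) p) = (\<Sum>j\<in>{1..(p - 1) div 2}. 1)"
    by (intro sum.cong refl) (use leg_mult_sq[OF pr p2 ndvd_small, of _ 1] leg_one p2 in auto)
  then show ?thesis using p3 by simp
qed

end



lemma sum_split0: "0 < (Nh::nat) \<Longrightarrow> (\<Sum>i<Nh. f i) = f 0 + (\<Sum>i\<in>{1..<Nh}. f i)"
proof -
  assume "0 < Nh"
  then have "{..<Nh} = insert 0 {1..<Nh}" by auto
  then show ?thesis by simp
qed

context
  fixes p d :: int
  assumes pr: "prime p" and p3: "p > 3" and dn: "\<not> p dvd d"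
begin

definition "Nh = nat ((p - 1) div 2)"

lemma hN: "int Nh = (p - 1) div 2" "Nh \<ge> 2" "p = 2 * int Nh + 1"
proof -
  have "odd p" using pr p3 prime_odd_int by auto
  then show "int Nh = (p - 1) div 2" "Nh \<ge> 2" "p = 2 * int Nh + 1" unfolding Nh_def using p3
    by (auto elim!: oddE)
qed

lemma rowsumA:
  assumes "i < Nh"
  shows "2 * (\<Sum>l<Nh. Legendre ((1 + int i)^2 + d * (1 + int l)^2) p) = - (Legendre d p + 1)"
  using sum_shift1[of "\<lambda>k. Legendre ((1 + int i)^2 + d * k^2) p" Nh]
    rowsum[OF pr p3 dn, of "1 + int i"] assms hN by simp

lemma colsumA:
  assumes "l < Nh"
  shows "2 * (\<Sum>i<Nh. Legendre ((1 + int i)^2 + d * (1 + int l)^2) p) = - (1 + Legendre d p)"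
  using sum_shift1[of "\<lambda>k. Legendre (k^2 + d * (1 + int l)^2) p" Nh]
    colsum[OF pr p3 dn, of "1 + int l"] assms hN by simp

lemma legA: "i < Nh \<Longrightarrow> l < Nh \<Longrightarrow> legmat d p 1 Nh $$ (i, l) = Legendre ((1 + int i)^2 + d * (1 + int l)^2) p"
  unfolding legmat_def by simp

lemma Sbar_eq: "Sbar d p = det (mat Nh Nh (\<lambda>(i, l). if i = 0 then 1
                              else Legendre ((1 + int i)^2 + d * (1 + int l)^2) p))"
  unfolding Sbar_def Nh_def Let_def by (rule arg_cong[where f = det], rule eq_matI) auto

lemma case1:
  assumes L1: "Legendre d p = 1"
  shows "Sbar d p = - S d p"
proof -
  define A where "A = legmat d p 1 Nh"
  define B where "B = mat Nh Nh (\<lambda>(i, l). if i = 0 then 1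
                              else Legendre ((1 + int i)^2 + d * (1 + int l)^2) p)"
  define C where "C = mat Nh Nh (\<lambda>(i, l). if i = 0 then -1 else A $$ (i,l))"
  have A: "A \<in> carrier_mat Nh Nh" unfolding A_def legmat_def by simp
  have Ae: "A $$ (i, l) = Legendre ((1 + int i)^2 + d * (1 + int l)^2) p" if "i < Nh" "l < Nh" for i l
    unfolding A_def using legA that by blast
  have B: "B \<in> carrier_mat Nh Nh" unfolding B_def by simp
  have C: "C \<in> carrier_mat Nh Nh" unfolding C_def by simp
  have N0: "0 < Nh" using hN by auto
  have "det C = det A"
  proof (rule det_row_add'[OF A C N0, of "{1..<Nh}"])
    show "\<forall>j<Nh. C $$ (0, j) = A $$ (0, j) + (\<Sum>l\<in>{1..<Nh}. A $$ (l, j))"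
    proof (intro allI impI)
      fix j assume j: "j < Nh"
      have "(\<Sum>i<Nh. A $$ (i, j)) = (\<Sum>i<Nh. Legendre ((1 + int i)^2 + d * (1 + int j)^2) p)"
        using Ae j by simp
      then have "2 * (\<Sum>i<Nh. A $$ (i, j)) = -2"
        using colsumA[OF j] L1 j by simp
      then have "(\<Sum>i<Nh. A $$ (i, j)) = -1" by simp
      then show "C $$ (0, j) = A $$ (0, j) + (\<Sum>l\<in>{1..<Nh}. A $$ (l, j))"
        using sum_split0[OF N0, of "\<lambda>i. A $$ (i, j)"] j N0 by (simp add: C_def)
    qed
  qed (auto simp: C_def)
  moreover have "C = multrow 0 (-1) B"
    by (rule eq_matI) (auto simp: C_def B_def mat_multrow_def Ae)
  moreover have "det (multrow 0 (-1) B) = - det B"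
    using det_multrow[OF N0 B, of "-1"] by simp
  ultimately have "det B = - det A" by simp
  then show ?thesis unfolding Sbar_eq S_def A_def B_def Nh_def by simp
qed


lemma leg2_eq: "legmat d p 2 Nh = mat (Nh - 1) (Nh - 1) (\<lambda>(i, l). Legendre ((2 + int i)^2 + d * (2 + int l)^2) p)"
  unfolding legmat_def by (rule eq_matI) auto

lemma case2_Sbar:
  assumes L1: "Legendre d p = -1"
  shows "Sbar d p = int Nh * det (legmat d p 2 Nh)"
proof -
  define B where "B = mat Nh Nh (\<lambda>(i, l). if i = 0 then 1
                              else Legendre ((1 + int i)^2 + d * (1 + int l)^2) p)"
  define B' where "B' = mat Nh Nh (\<lambda>(i, l). if l = 0 then (if i = 0 then int Nh else 0) else B $$ (i,l))"
  have B: "B \<in> carrier_mat Nh Nh" unfolding B_def by simp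
  have B': "B' \<in> carrier_mat Nh Nh" unfolding B'_def by simp
  have N0: "0 < Nh" using hN by auto
  have "det B' = det B"
  proof (rule det_col_add[OF B B' N0, of "{1..<Nh}"])
    show "\<forall>i<Nh. B' $$ (i, 0) = B $$ (i, 0) + (\<Sum>l\<in>{1..<Nh}. B $$ (i, l))"
    proof (intro allI impI)
      fix i assume i: "i < Nh"
      have "B $$ (i, 0) + (\<Sum>l\<in>{1..<Nh}. B $$ (i, l)) = (\<Sum>l<Nh. B $$ (i, l))"
        using sum_split0[OF N0, of "\<lambda>l. B $$ (i, l)"] by simp
      also have "\<dots> = (if i = 0 then int Nh else 0)"
      proof (cases "i = 0")
        case True
        then show ?thesis using i by (simp add: B_def)
      next
        case False
        have "(\<Sum>l<Nh. B $$ (i, l)) = (\<Sum>l<Nh. Legendre ((1 + int i)^2 + d * (1 + int l)^2) p)"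
          using False i by (simp add: B_def)
        then show ?thesis using rowsumA[OF i] L1 False by simp
      qed
      finally show "B' $$ (i, 0) = B $$ (i, 0) + (\<Sum>l\<in>{1..<Nh}. B $$ (i, l))"
        using i by (simp add: B'_def)
    qed
  qed (auto simp: B'_def)
  moreover have "det B' = B' $$ (0, 0) * cofactor B' 0 0"
    by (rule det_col_single[OF B' N0 N0]) (simp add: B'_def)
  moreover have "mat_delete B' 0 0 = legmat d p 2 Nh"
    unfolding leg2_eq mat_delete_def using B'
    by (intro eq_matI) (auto simp: B'_def B_def algebra_simps)
  ultimately have "det B = int Nh * det (legmat d p 2 Nh)"
    using N0 by (simp add: cofactor_def B'_def)
  then show ?thesis unfolding Sbar_eq B_def .
qed

lemma case2_T:
  assumes L1: "Legendre d p = -1"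
  shows "T d p = int Nh * int Nh * det (legmat d p 2 Nh)"
proof -
  define M where "M = legmat d p 0 Nh"
  have M: "M \<in> carrier_mat (Nh+1) (Nh+1)" unfolding M_def legmat_def by simp
  have Me: "M $$ (i, l) = Legendre ((int i)^2 + d * (int l)^2) p" if "i < Nh+1" "l < Nh+1" for i l
    unfolding M_def legmat_def using that by simp
  define M1 where "M1 = mat (Nh+1) (Nh+1) (\<lambda>(i,l). if i = 1 then (if l = 0 then int Nh else 0) else M $$ (i,l))"
  have M1: "M1 \<in> carrier_mat (Nh+1) (Nh+1)" unfolding M1_def by simp
  have N0: "0 < Nh" using hN by auto
  have one: "1 < Nh + 1" using N0 by simp
  have legdl: "Legendre (d * (int l)^2) p = -1" if "1 \<le> l" "l < Nh+1" for l
  proof -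
    have "\<not> p dvd int l" using ndvd_small[OF pr p3 dn, of "int l"] that hN by simp
    then show ?thesis using leg_mult_sq[OF pr p2[OF pr p3 dn]] L1 by simp
  qed
  have "det M1 = det M"
  proof (rule det_row_add'[OF M M1 one, of "{2..<Nh+1}"])
    show "\<forall>j<Nh+1. M1 $$ (1, j) = M $$ (1, j) + (\<Sum>l\<in>{2..<Nh+1}. M $$ (l, j))"
    proof (intro allI impI)
      fix j assume j: "j < Nh + 1"
      have "M $$ (1, j) + (\<Sum>l\<in>{2..<Nh+1}. M $$ (l, j)) = (\<Sum>l\<in>{1..<Nh+1}. M $$ (l, j))"
      proof -
        have "{1..<Nh+1} = insert 1 {2..<Nh+1}" using N0 by auto
        then show ?thesis by simp
      qed
      also have "\<dots> = (\<Sum>l\<in>{1..<Nh+1}. Legendre ((int l)^2 + d * (int j)^2) p)"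
        using j Me by (intro sum.cong) auto
      also have "\<dots> = (\<Sum>k\<in>{1..int Nh}. Legendre (k^2 + d * (int j)^2) p)"
        by (rule sum_shift2)
      also have "\<dots> = (if j = 0 then int Nh else 0)"
      proof (cases "j = 0")
        case True
        then show ?thesis using sqsum[OF pr p3 dn] hN by simp
      next
        case False
        then show ?thesis using colsum[OF pr p3 dn, of "int j"] j hN L1 by simp
      qed
      moreover have "M1 $$ (1, j) = (if j = 0 then int Nh else 0)"
        using j N0 by (simp add: M1_def)
      ultimately show "M1 $$ (1, j) = M $$ (1, j) + (\<Sum>l\<in>{2..<Nh+1}. M $$ (l, j))"
        by simp
    qed
  qed (auto simp: M1_def)
  moreover have "det M1 = M1 $$ (1, 0) * cofactor M1 1 0"
    by (rule det_row_single[OF M1 one]) (auto simp: M1_def)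
  moreover define D where "D = mat_delete M1 1 0"
  have D: "D \<in> carrier_mat Nh Nh" unfolding D_def using mat_delete_carrier[OF M1] by simp
  have De: "D $$ (i, l) = (if i = 0 then -1 else Legendre ((1 + int i)^2 + d * (1 + int l)^2) p)"
    if "i < Nh" "l < Nh" for i l
    unfolding D_def mat_delete_def using that legdl[of "Suc l"]
    by (auto simp: M1_def Me algebra_simps)
  define D1 where "D1 = mat Nh Nh (\<lambda>(i, l). if l = 0 then (if i = 0 then - int Nh else 0) else D $$ (i,l))"
  have D1: "D1 \<in> carrier_mat Nh Nh" unfolding D1_def by simp
  have "det D1 = det D"
  proof (rule det_col_add[OF D D1 N0, of "{1..<Nh}"])
    show "\<forall>i<Nh. D1 $$ (i, 0) = D $$ (i, 0) + (\<Sum>l\<in>{1..<Nh}. D $$ (i, l))"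
    proof (intro allI impI)
      fix i assume i: "i < Nh"
      have "D $$ (i, 0) + (\<Sum>l\<in>{1..<Nh}. D $$ (i, l)) = (\<Sum>l<Nh. D $$ (i, l))"
        using sum_split0[OF N0, of "\<lambda>l. D $$ (i, l)"] by simp
      also have "\<dots> = (if i = 0 then - int Nh else 0)"
      proof (cases "i = 0")
        case True
        then show ?thesis using i De by simp
      next
        case False
        have "(\<Sum>l<Nh. D $$ (i, l)) = (\<Sum>l<Nh. Legendre ((1 + int i)^2 + d * (1 + int l)^2) p)"
          using False i De by simp
        then show ?thesis using rowsumA[OF i] L1 False by simp
      qed
      finally show "D1 $$ (i, 0) = D $$ (i, 0) + (\<Sum>l\<in>{1..<Nh}. D $$ (i, l))"
        using i by (simp add: D1_def)
    qed
  qed (auto simp: D1_def)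
  moreover have "det D1 = D1 $$ (0, 0) * cofactor D1 0 0"
    by (rule det_col_single[OF D1 N0 N0]) (simp add: D1_def)
  moreover have "mat_delete D1 0 0 = legmat d p 2 Nh"
    unfolding leg2_eq mat_delete_def using D1
    by (intro eq_matI) (auto simp: D1_def De algebra_simps)
  ultimately have "det M = int Nh * int Nh * det (legmat d p 2 Nh)"
    using N0 by (simp add: cofactor_def D1_def M1_def D_def)
  then show ?thesis unfolding T_def M_def Nh_def .
qed

end



lemma red_pow:
  fixes p x :: int
  assumes pr: "prime p" and p2: "p > 2" and e: "e \<ge> 1" and N: "2 * N = nat (p - 1)"
  shows "[x ^ (2 * (e + N)) = x ^ (2 * e)] (mod p)"
proof (cases "p dvd x")
  case True
  have k: "0 < 2 * (e + N)" "0 < 2 * e" using e by auto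
  have "p dvd x ^ (2 * (e + N))" "p dvd x ^ (2 * e)"
    using dvd_trans[OF True dvd_power[of "2 * (e + N)" x]] dvd_trans[OF True dvd_power[of "2 * e" x]] k by auto
  then show ?thesis by (simp add: cong_def dvd_eq_mod_eq_0)
next
  case False
  have "x ^ (2 * (e + N)) = x ^ (2 * e) * x ^ nat (p - 1)"
    by (simp add: N[symmetric] power_add[symmetric] algebra_simps)
  also have "[\<dots> = x ^ (2 * e) * 1] (mod p)"
    using fermat_int[OF pr p2 False] by (intro cong_mult cong_refl)
  finally show ?thesis by simp
qed

lemma Tm_cong0:
  fixes p d :: int and m :: nat
  assumes pr: "prime p" and p3: "p > 3" and m1: "(p - 1) div 2 < int m" and m2: "int m < p - 1"
  shows "[Tm m d p = 0] (mod p)"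
proof -
  define N where "N = nat ((p - 1) div 2)"
  have p2: "p > 2" using p3 by simp
  have "odd p" using pr p3 prime_odd_int by auto
  then have hN: "p = 2 * int N + 1" "N \<ge> 2" unfolding N_def using p3 by (auto elim!: oddE)
  have N2: "2 * N = nat (p - 1)" using hN by simp
  have iN: "int N = (p - 1) div 2" unfolding N_def using p3 by simp
  have "int N < int m" "int m < 2 * int N" using m1 m2 hN iN by linarith+
  then have mN: "N < m" "m < 2 * N" by simp_all
  define c where "c r = int (m choose r) * d ^ (m - r)" for r
  define E where "E = mat (N+1) (N+1) (\<lambda>(i, l). ((int i)^2 + d * (int l)^2) ^ m)"
  define P where "P = mat (N+1) (N+1) (\<lambda>(i, a). if a = 0 then 0 else if a < N then (int i)^(2*a)
                     else c 0 + c N * (int i)^(2*N))"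
  define Q where "Q = mat (N+1) (N+1) (\<lambda>(a, l). if a = N then (int l)^(2*(m-N))
                     else c a * (int l)^(2*(m-a)) + (if a + N \<le> m then c (a+N) * (int l)^(2*(m-a-N)) else 0))"
  have E: "E \<in> carrier_mat (N+1) (N+1)" and P: "P \<in> carrier_mat (N+1) (N+1)"
    and Q: "Q \<in> carrier_mat (N+1) (N+1)" unfolding E_def P_def Q_def by auto
  have PQ: "P * Q \<in> carrier_mat (N+1) (N+1)" using P Q by auto
  have detP: "det P = 0"
    using laplace_expansion_column[OF P, of 0] by (simp add: P_def)
  have entry: "[E $$ (i, l) = (P * Q) $$ (i, l)] (mod p)" if i: "i < N+1" and l: "l < N+1" for i l
  proof -
    define x where "x = int i"
    define y where "y = int l"
    define t where "t r = c r * x^(2*r) * y^(2*(m-r))" for r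
    have "E $$ (i, l) = (x^2 + d * y^2) ^ m" using i l by (simp add: E_def x_def y_def)
    also have "\<dots> = (\<Sum>r\<le>m. t r)"
      unfolding binomial_ring
    proof (intro sum.cong refl)
      fix r
      have a: "(x^2)^r = x^(2*r)" by (simp add: power_mult)
      have b: "(d * y^2)^(m-r) = d^(m-r) * y^(2*(m-r))" by (simp add: power_mult_distrib power_mult)
      show "of_nat (m choose r) * (x^2)^r * (d * y^2)^(m-r) = t r"
        unfolding a b t_def c_def by (simp add: mult_ac)
    qed
    also have "(\<Sum>r\<le>m. t r) = t 0 + (\<Sum>r\<in>{1..<N}. t r) + t N + (\<Sum>a\<in>{1..m-N}. t (a + N))"
    proof -
      have s: "{..m} = insert 0 (insert N ({1..<N} \<union> {N+1..m}))" using mN by auto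
      have "(\<Sum>r\<in>{N+1..m}. t r) = (\<Sum>a\<in>{1..m-N}. t (a + N))"
        by (rule sum.reindex_bij_witness[of _ "\<lambda>a. a + N" "\<lambda>r. r - N"]) auto
      moreover have "(\<Sum>r\<in>{1..<N} \<union> {N+1..m}. t r) = (\<Sum>r\<in>{1..<N}. t r) + (\<Sum>r\<in>{N+1..m}. t r)"
        by (rule sum.union_disjoint) auto
      ultimately show ?thesis unfolding s using hN by (simp add: algebra_simps)
    qed
    also have "[\<dots> = c 0 * y^(2*(m-N)) + (\<Sum>r\<in>{1..<N}. t r) + t N
                   + (\<Sum>a\<in>{1..m-N}. c (a + N) * x^(2*a) * y^(2*(m-a-N)))] (mod p)"
    proof (intro cong_add cong_refl)
      have "y^(2*m) = y^(2*((m - N) + N))" using mN by simp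
      then have "[y^(2*m) = y^(2*(m-N))] (mod p)" using red_pow[OF pr p2 _ N2, of "m - N" y] mN by simp
      then show "[t 0 = c 0 * y ^ (2 * (m - N))] (mod p)" unfolding t_def by (simp add: cong_mult cong_refl)
      show "[(\<Sum>a\<in>{1..m-N}. t (a + N)) = (\<Sum>a\<in>{1..m-N}. c (a + N) * x^(2*a) * y^(2*(m-a-N)))] (mod p)"
      proof (rule cong_sum)
        fix a assume a: "a \<in> {1..m-N}"
        have "[x^(2*(a+N)) = x^(2*a)] (mod p)" using red_pow[OF pr p2 _ N2, of a x] a by simp
        moreover have "m - (a + N) = m - a - N" by simp
        ultimately show "[t (a + N) = c (a + N) * x^(2*a) * y^(2*(m-a-N))] (mod p)"
          unfolding t_def by (metis cong_mult cong_refl)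
      qed
    qed
    also have "c 0 * y^(2*(m-N)) + (\<Sum>r\<in>{1..<N}. t r) + t N
                   + (\<Sum>a\<in>{1..m-N}. c (a + N) * x^(2*a) * y^(2*(m-a-N))) = (P * Q) $$ (i, l)"
    proof -
      have "(P * Q) $$ (i, l) = (\<Sum>a<N+1. P $$ (i, a) * Q $$ (a, l))"
        using i l P Q by (simp add: scalar_prod_def lessThan_atLeast0)
      also have "\<dots> = (\<Sum>a\<in>{1..<N}. P $$ (i, a) * Q $$ (a, l)) + P $$ (i, N) * Q $$ (N, l)"
      proof -
        have s: "{..<N+1} = insert 0 (insert N {1..<N})" using hN by auto
        show ?thesis unfolding s using hN i by (simp add: P_def)
      qed
      also have "(\<Sum>a\<in>{1..<N}. P $$ (i, a) * Q $$ (a, l))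
          = (\<Sum>a\<in>{1..<N}. t a) + (\<Sum>a\<in>{1..<N}. if a + N \<le> m then c (a+N) * x^(2*a) * y^(2*(m-a-N)) else 0)"
        unfolding sum.distrib[symmetric]
        using i l by (intro sum.cong refl) (auto simp: P_def Q_def t_def x_def y_def algebra_simps)
      also have "(\<Sum>a\<in>{1..<N}. if a + N \<le> m then c (a+N) * x^(2*a) * y^(2*(m-a-N)) else 0)
          = (\<Sum>a\<in>{a\<in>{1..<N}. a + N \<le> m}. c (a+N) * x^(2*a) * y^(2*(m-a-N)))"
        by (rule sum.inter_filter[symmetric]) simp
      also have "{a\<in>{1..<N}. a + N \<le> m} = {1..m-N}" using mN by auto
      also have "P $$ (i, N) * Q $$ (N, l) = c 0 * y^(2*(m-N)) + t N"
        using i l hN by (simp add: P_def Q_def t_def x_def y_def algebra_simps)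
      finally show ?thesis by simp
    qed
    finally show ?thesis .
  qed
  have "[det E = det (P * Q)] (mod p)"
    by (rule det_cong_mod[OF E PQ]) (use entry in auto)
  moreover have "det (P * Q) = 0" using det_mult[OF P Q] detP by simp
  moreover have "Tm m d p = det E" unfolding Tm_def E_def N_def Let_def by simp
  ultimately show ?thesis by simp
qed


theorem theorem1p1:
  fixes p d :: int
  assumes "prime p" and "p > 3"
  shows "(Legendre d p = 1 \<longrightarrow> Sbar d p = - S d p)
     \<and> (Legendre d p = -1 \<longrightarrow>
          real_of_int (Sbar d p) = 2 / (real_of_int p - 1) * real_of_int (T d p)
        \<and> 2 / (real_of_int p - 1) * real_of_int (T d p)
            = (real_of_int p - 1) / 2 * real_of_int (det (legmat d p 2 (nat ((p - 1) div 2)))))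
     \<and> (\<forall>m::nat. (p - 1) div 2 < int m \<and> int m < p - 1 \<longrightarrow> [Tm m d p = 0] (mod p))"
proof (intro conjI impI allI)
  assume L1: "Legendre d p = 1"
  then have dn: "\<not> p dvd d" using leg_zero_iff[of d p] by simp
  show "Sbar d p = - S d p" using case1[OF assms dn L1] .
next
  fix m :: nat
  assume "(p - 1) div 2 < int m \<and> int m < p - 1"
  then show "[Tm m d p = 0] (mod p)" using Tm_cong0[OF assms] by blast
next
  assume L1: "Legendre d p = -1"
  then have dn: "\<not> p dvd d" using leg_zero_iff[of d p] by simp
  define n where "n = Nh p"
  define D where "D = det (legmat d p 2 (nat ((p - 1) div 2)))"
  have nD: "Nh p = nat ((p - 1) div 2)" using Nh_def[OF assms dn] .
  have Sb: "Sbar d p = int n * D" using case2_Sbar[OF assms dn L1] unfolding n_def D_def nD .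
  have Tt: "T d p = int n * int n * D" using case2_T[OF assms dn L1] unfolding n_def D_def nD .
  have pn: "p = 2 * int n + 1" "n \<ge> 2" using hN[OF assms dn] unfolding n_def by auto
  have rp: "real_of_int p - 1 = 2 * real n" using pn by simp
  show "real_of_int (Sbar d p) = 2 / (real_of_int p - 1) * real_of_int (T d p)"
    unfolding rp Sb Tt using pn by (simp add: field_simps)
  show "2 / (real_of_int p - 1) * real_of_int (T d p) = (real_of_int p - 1) / 2 * real_of_int D"
    unfolding rp Tt using pn by (simp add: field_simps)
qed

end
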